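(* Let $n\ge1$ and $\vec p,\vec q\in[0,1]^n$ with $p_i\ge q_i$ for all $i$. Let $X=S_{\vec p}$ be a sum of $n$ independent $\mathrm{Ber}(p_i)$ random variables and $Y=S_{\vec q}$ a sum of $n$ independent $\mathrm{Ber}(q_i)$ random variables. Let $\sigma_{\vec p}^2=\mathrm{Var}(X)=\sum_ip_i(1-p_i)$, $m_{\vec p}=\mathbb E X$, $\Delta=\sum_{i=1}^n(p_i-q_i)$, $g(k)=\mathbb P(X\ge k)-\mathbb P(Y\ge k)$ for $k\in\mathbb Z$, and $J=\sum_{k\in\mathbb Z}(k-m_{\vec p})^2g(k)$. Then $$J\le2\Delta\big(\sigma_{\vec p}^2+1+\Delta^2\big).$$ *)

theory Defs
  imports "HOL-Probability.Probability"
begin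

definition bern_sum_pmf :: "nat \<Rightarrow> (nat \<Rightarrow> real) \<Rightarrow> int pmf" where
  "bern_sum_pmf n p =
     map_pmf (\<lambda>f. int (card {i\<in>{..<n}. f i})) (Pi_pmf {..<n} False (\<lambda>i. bernoulli_pmf (p i)))"

end

theory Submission
  imports Defs
begin

lemma bern_sum_0: "bern_sum_pmf 0 p = return_pmf 0"
  by (simp add: bern_sum_pmf_def)

lemma bern_sum_Suc:
  "bern_sum_pmf (Suc n) p = bind_pmf (bernoulli_pmf (p n))
      (\<lambda>y. map_pmf (\<lambda>x. x + of_bool y) (bern_sum_pmf n p))"
proof -
  have "{..<Suc n} = insert n {..<n}" by auto
  hence "bern_sum_pmf (Suc n) p = map_pmf (\<lambda>f. int (card {i\<in>{..<Suc n}. f i}))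
     (bind_pmf (bernoulli_pmf (p n)) (\<lambda>y. bind_pmf (Pi_pmf {..<n} False (\<lambda>i. bernoulli_pmf (p i))) (\<lambda>f. return_pmf (f(n := y)))))"
    unfolding bern_sum_pmf_def by (simp add: Pi_pmf_insert')
  also have "\<dots> = bind_pmf (bernoulli_pmf (p n)) (\<lambda>y. map_pmf (\<lambda>f. int (card {i\<in>{..<Suc n}. (f(n:=y)) i})) (Pi_pmf {..<n} False (\<lambda>i. bernoulli_pmf (p i))))"
    by (simp add: map_bind_pmf map_pmf_def bind_assoc_pmf bind_return_pmf)
  also have "\<dots> = bind_pmf (bernoulli_pmf (p n))
      (\<lambda>y. map_pmf (\<lambda>x. x + of_bool y) (bern_sum_pmf n p))"
    unfolding bern_sum_pmf_def pmf.map_comp o_def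
  proof (intro bind_pmf_cong refl map_pmf_cong)
    fix y f
    have "{i\<in>{..<Suc n}. (f(n:=y)) i} = (if y then insert n {i\<in>{..<n}. f i} else {i\<in>{..<n}. f i})"
      by auto
    thus "int (card {i\<in>{..<Suc n}. (f(n:=y)) i}) = int (card {i\<in>{..<n}. f i}) + of_bool y"
      by auto
  qed
  finally show ?thesis .
qed

lemma bern_sum_set: "set_pmf (bern_sum_pmf n p) \<subseteq> {0..int n}"
proof
  fix x assume "x \<in> set_pmf (bern_sum_pmf n p)"
  then obtain f where x: "x = int (card {i\<in>{..<n}. f i})" unfolding bern_sum_pmf_def by auto
  have "card {i\<in>{..<n}. f i} \<le> card {..<n}" by (rule card_mono) auto
  thus "x \<in> {0..int n}" using x by simp
qed

lemma bern_sum_finite: "finite (set_pmf (bern_sum_pmf n p))"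
  using bern_sum_set finite_subset by blast

lemma bern_sum_exp_Suc:
  fixes h :: "int \<Rightarrow> real"
  assumes "0 \<le> p n" "p n \<le> 1"
  shows "measure_pmf.expectation (bern_sum_pmf (Suc n) p) h =
     p n * measure_pmf.expectation (bern_sum_pmf n p) (\<lambda>x. h (x + 1)) +
     (1 - p n) * measure_pmf.expectation (bern_sum_pmf n p) h"
  unfolding bern_sum_Suc
  by (subst pmf_expectation_bind[of UNIV]) (use assms bern_sum_finite in \<open>auto simp: UNIV_bool\<close>)


lemma alg1: fixes k s a c p :: real shows
 "p * (a - (c - 1)) + (1 - p) * (a - c) = (a + p) - c"
  by (simp add: algebra_simps)
lemma alg2: fixes k s a c p :: real shows
 "p * (s + (a - (c - 1))^2) + (1 - p) * (s + (a - c)^2) = (s + p * (1 - p)) + ((a + p) - c)^2"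
  by (simp add: algebra_simps power2_eq_square)
lemma alg3: fixes k s a c p :: real shows
 "p * (k + 3 * s * (a - (c - 1)) + (a - (c - 1))^3) + (1 - p) * (k + 3 * s * (a - c) + (a - c)^3)
   = (k + p * (1 - p) * (1 - 2 * p)) + 3 * (s + p * (1 - p)) * ((a + p) - c) + ((a + p) - c)^3"
  by (simp add: algebra_simps power3_eq_cube)

lemma exp_one: "measure_pmf.expectation (M::'a pmf) (\<lambda>x. 1::real) = 1"
  by simp

lemma bern_sum_moments:
  assumes "\<forall>i<n. 0 \<le> p i \<and> p i \<le> 1"
  shows "measure_pmf.expectation (bern_sum_pmf n p) (\<lambda>x. real_of_int x - c) = (\<Sum>i<n. p i) - c \<and>
    measure_pmf.expectation (bern_sum_pmf n p) (\<lambda>x. (real_of_int x - c)^2) =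
       (\<Sum>i<n. p i * (1 - p i)) + ((\<Sum>i<n. p i) - c)^2 \<and>
    measure_pmf.expectation (bern_sum_pmf n p) (\<lambda>x. (real_of_int x - c)^3) =
       (\<Sum>i<n. p i * (1 - p i) * (1 - 2 * p i)) + 3 * (\<Sum>i<n. p i * (1 - p i)) * ((\<Sum>i<n. p i) - c)
        + ((\<Sum>i<n. p i) - c)^3"
  using assms
proof (induction n arbitrary: c)
  case 0
  then show ?case by (simp add: bern_sum_0)
next
  case (Suc n)
  have p: "0 \<le> p n" "p n \<le> 1" using Suc.prems by auto
  have e: "\<And>j. (\<lambda>x. (real_of_int (x + 1) - c)^j) = (\<lambda>x. (real_of_int x - (c - 1))^j)"
    by (simp add: algebra_simps)
  have e1: "(\<lambda>x. (real_of_int (x + 1) - c)) = (\<lambda>x. (real_of_int x - (c - 1)))"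
    by (simp add: algebra_simps)
  have hyp: "\<forall>i<n. 0 \<le> p i \<and> p i \<le> 1" using Suc.prems by auto
  note ih1 = Suc.IH[of c, OF hyp] and ih2 = Suc.IH[of "c - 1", OF hyp]
  show ?case
    unfolding bern_sum_exp_Suc[of p n, OF p] e e1 sum.lessThan_Suc
    unfolding ih1[THEN conjunct1] ih1[THEN conjunct2, THEN conjunct1] ih1[THEN conjunct2, THEN conjunct2]
      ih2[THEN conjunct1] ih2[THEN conjunct2, THEN conjunct1] ih2[THEN conjunct2, THEN conjunct2]
    unfolding alg1 alg2 alg3 by (intro conjI refl)
qed


lemma exp_sum: "measure_pmf.expectation (bern_sum_pmf n p) f =
   (\<Sum>a\<in>{0..int n}. f a * pmf (bern_sum_pmf n p) a)"
  by (rule integral_measure_pmf_real) (auto dest!: subsetD[OF bern_sum_set])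

lemma prob_sum: "measure_pmf.prob (bern_sum_pmf n p) {x. x \<ge> k} =
   (\<Sum>a\<in>{0..int n}. (if k \<le> a then 1 else 0) * pmf (bern_sum_pmf n p) a)"
proof -
  have "measure_pmf.prob (bern_sum_pmf n p) {x. x \<ge> k} =
     measure_pmf.expectation (bern_sum_pmf n p) (indicator {x. x \<ge> k})" by simp
  also have "\<dots> = (\<Sum>a\<in>{0..int n}. (if k \<le> a then 1 else 0) * pmf (bern_sum_pmf n p) a)"
    unfolding exp_sum by (intro sum.cong) (auto simp: indicator_def)
  finally show ?thesis .
qed

lemma sum_sq_nat:
  fixes m :: real and j :: nat
  shows "(\<Sum>k\<in>{1..int j}. (real_of_int k - m)^2) =
     ((real j - m)^3/3 + (real j - m)^2/2 + (real j - m)/6)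
     - ((- m)^3/3 + (- m)^2/2 + (- m)/6)"
proof (induction j)
  case 0
  then show ?case by simp
next
  case (Suc i)
  have "{1..int (Suc i)} = insert (int i + 1) {1..int i}" by auto
  hence "(\<Sum>k\<in>{1..int (Suc i)}. (real_of_int k - m)^2) = (real i + 1 - m)^2 + (\<Sum>k\<in>{1..int i}. (real_of_int k - m)^2)"
    by simp
  also have "\<dots> = (real i + 1 - m)^2 + ((real i - m)^3/3 + (real i - m)^2/2 + (real i - m)/6)
     - ((- m)^3/3 + (- m)^2/2 + (- m)/6)" using Suc by simp
  also have "\<dots> = ((real (Suc i) - m)^3/3 + (real (Suc i) - m)^2/2 + (real (Suc i) - m)/6)
     - ((- m)^3/3 + (- m)^2/2 + (- m)/6)"
    by (simp add: field_simps power2_eq_square power3_eq_cube)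
  finally show ?case .
qed

lemma sum_sq_int:
  fixes m :: real and a :: int
  assumes "0 \<le> a"
  shows "(\<Sum>k\<in>{1..a}. (real_of_int k - m)^2) =
     ((real_of_int a - m)^3/3 + (real_of_int a - m)^2/2 + (real_of_int a - m)/6)
     - ((- m)^3/3 + (- m)^2/2 + (- m)/6)"
  using sum_sq_nat[of m "nat a"] assms by simp

lemma lin3: "(\<Sum>a\<in>A. (u a / 3 + v a / 2 + w a / 6) * P a) =
   (\<Sum>a\<in>A. u a * P a) / 3 + (\<Sum>a\<in>A. v a * P a) / 2 + (\<Sum>a\<in>A. w a * P a) / 6"
  for u v w P :: "int \<Rightarrow> real"
  by (simp add: sum.distrib sum_divide_distrib algebra_simps)

lemma lin_aux:
  fixes k k' s t d td sd d2 d3 :: real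
  assumes "0 \<le> d" "k - k' \<le> d" "s - t \<le> d"
    "td \<le> sd + d2" "d2 \<le> d + d3" "0 \<le> sd" "0 \<le> d3"
  shows "(k - k')/3 + td + d3/3 + (s - t)/2 - d2/2 + d/6 \<le> 2 * sd + 2 * d + 2 * d3"
  using assms by (simp add: field_simps)

lemma final_ineq:
  fixes k k' s t d :: real
  assumes "0 \<le> d" "0 \<le> s" "k - k' \<le> d" "t - s \<le> d" "s - t \<le> d"
  shows "(k/3 + s/2) - ((k' + 3 * t * (-d) + (-d)^3)/3 + (t + (-d)^2)/2 + (-d)/6)
     \<le> 2 * d * (s + 1 + d^2)"
proof -
  have "t * d \<le> (s + d) * d" using assms by (intro mult_right_mono) auto
  hence 1: "t * d \<le> s * d + d^2" by (simp add: algebra_simps power2_eq_square)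
  have 2: "d^2 \<le> d + d^3"
  proof -
    have "0 \<le> d * ((d - 1/2)^2 + 3/4)" using assms by simp
    thus ?thesis by (simp add: algebra_simps power2_eq_square power3_eq_cube)
  qed
  have 3: "0 \<le> s * d" "0 \<le> d^3" using assms by simp_all
  have "(k/3 + s/2) - ((k' + 3 * t * (-d) + (-d)^3)/3 + (t + (-d)^2)/2 + (-d)/6)
     = (k - k')/3 + t * d + d^3/3 + (s - t)/2 - d^2/2 + d/6"
    by (simp add: field_simps power2_eq_square power3_eq_cube)
  also have "\<dots> \<le> 2 * (s * d) + 2 * d + 2 * d^3"
    by (rule lin_aux[OF assms(1,3,5) 1 2 3])
  also have "\<dots> = 2 * d * (s + 1 + d^2)"
    by (simp add: algebra_simps power2_eq_square power3_eq_cube)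
  finally show ?thesis .
qed

lemma kappa_bound:
  fixes p q :: real
  assumes "0 \<le> q" "q \<le> p" "p \<le> 1"
  shows "p * (1 - p) * (1 - 2 * p) - q * (1 - q) * (1 - 2 * q) \<le> p - q"
proof -
  have "p*p \<le> p" "q*q \<le> q" "p*q \<le> q" using assms by (simp_all add: mult_left_le_one_le mult_le_one mult_left_le)
  hence h: "2*(p*p - p) \<le> 0" "2*(q*q-q) \<le> 0" "2*(p*q - q) \<le> 0" "q - p \<le> 0" using assms by auto
  have "2*(p*p+p*q+q*q) - 3*(p+q) = 2*(p*p - p) + 2*(q*q-q) + 2*(p*q - q) + (q - p)"
    by (simp add: algebra_simps)
  also have "\<dots> \<le> 0" by (intro add_nonpos_nonpos h)
  finally have "2*(p*p+p*q+q*q) - 3*(p+q) \<le> 0" .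
  hence "(p - q) * (2*(p*p+p*q+q*q) - 3*(p+q)) \<le> 0" using assms by (intro mult_nonneg_nonpos) auto
  thus ?thesis by (simp add: algebra_simps)
qed

theorem lemma8:
  fixes n :: nat and p q :: "nat \<Rightarrow> real"
  assumes "n \<ge> 1"
    and "\<And>i. i < n \<Longrightarrow> 0 \<le> p i \<and> p i \<le> 1"
    and "\<And>i. i < n \<Longrightarrow> 0 \<le> q i \<and> q i \<le> 1"
    and "\<And>i. i < n \<Longrightarrow> q i \<le> p i"
  shows
    "let X = bern_sum_pmf n p; Y = bern_sum_pmf n q;
         \<sigma>2 = (\<Sum>i<n. p i * (1 - p i));
         m = (\<Sum>i<n. p i);
         \<Delta> = (\<Sum>i<n. p i - q i);
         g = (\<lambda>k::int. measure_pmf.prob X {x. x \<ge> k} - measure_pmf.prob Y {x. x \<ge> k});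
         J = (\<Sum>\<^sub>\<infinity>k\<in>(UNIV::int set). (real_of_int k - m)^2 * g k)
     in J \<le> 2 * \<Delta> * (\<sigma>2 + 1 + \<Delta>^2)"
proof -
  define X where "X = bern_sum_pmf n p"
  define Y where "Y = bern_sum_pmf n q"
  define s where "s = (\<Sum>i<n. p i * (1 - p i))"
  define t where "t = (\<Sum>i<n. q i * (1 - q i))"
  define k where "k = (\<Sum>i<n. p i * (1 - p i) * (1 - 2 * p i))"
  define k' where "k' = (\<Sum>i<n. q i * (1 - q i) * (1 - 2 * q i))"
  define m where "m = (\<Sum>i<n. p i)"
  define b where "b = (\<Sum>i<n. q i)"
  define d where "d = (\<Sum>i<n. p i - q i)"
  define N where "N = {0..int n}"
  define D where "D = (\<lambda>a. pmf X a - pmf Y a)"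
  define g where "g = (\<lambda>k::int. measure_pmf.prob X {x. x \<ge> k} - measure_pmf.prob Y {x. x \<ge> k})"
  define G where "G = (\<lambda>a::int. (real_of_int a - m)^3/3 + (real_of_int a - m)^2/2 + (real_of_int a - m)/6)"
  have fN: "finite N" unfolding N_def by simp
  have db: "d = m - b" unfolding d_def m_def b_def by (simp add: sum_subtractf)
  have P1: "(\<Sum>a\<in>N. pmf X a) = 1" using exp_sum[of n p "\<lambda>_. 1"] unfolding X_def N_def by simp
  have Q1: "(\<Sum>a\<in>N. pmf Y a) = 1" using exp_sum[of n q "\<lambda>_. 1"] unfolding Y_def N_def by simp
  have gD: "g k = (\<Sum>a\<in>N. (if k \<le> a then 1 else 0) * D a)" for k
    unfolding g_def D_def X_def Y_def N_def prob_sum by (simp add: sum_subtractf algebra_simps)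
  have g0: "g k = 0" if "k \<notin> {1..int n}" for k
  proof (cases "k \<le> 0")
    case True
    hence "g k = (\<Sum>a\<in>N. D a)" unfolding gD by (intro sum.cong) (auto simp: N_def)
    also have "\<dots> = 0" unfolding D_def using P1 Q1 by (simp add: sum_subtractf)
    finally show ?thesis .
  next
    case False
    hence "k > int n" using that by auto
    thus ?thesis unfolding gD by (intro sum.neutral) (auto simp: N_def)
  qed
  have J1: "(\<Sum>\<^sub>\<infinity>k\<in>(UNIV::int set). (real_of_int k - m)^2 * g k) =
      (\<Sum>k\<in>{1..int n}. (real_of_int k - m)^2 * g k)"
    by (subst infsum_cong_neutral[where T = "{1..int n}" and g = "\<lambda>k. (real_of_int k - m)^2 * g k"])
       (auto simp: g0)
  also have "\<dots> = (\<Sum>a\<in>N. D a * (\<Sum>k\<in>{1..int n}. if k \<le> a then (real_of_int k - m)^2 else 0))"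
    unfolding gD sum_distrib_left sum_distrib_right
    by (subst sum.swap) (intro sum.cong refl, simp)
  also have "\<dots> = (\<Sum>a\<in>N. D a * (G a - G 0))"
  proof (intro sum.cong refl)
    fix a assume a: "a \<in> N"
    have "(\<Sum>k\<in>{1..int n}. if k \<le> a then (real_of_int k - m)^2 else 0) =
        (\<Sum>k\<in>{1..a}. (real_of_int k - m)^2)"
      using a by (intro sum.mono_neutral_cong_right) (auto simp: N_def)
    also have "(\<Sum>k\<in>{1..a}. (real_of_int k - m)^2) = G a - G 0"
      using sum_sq_int[of a m] a unfolding G_def N_def by simp
    finally show "D a * (\<Sum>k\<in>{1..int n}. if k \<le> a then (real_of_int k - m)^2 else 0) = D a * (G a - G 0)"
      by simp
  qed
  also have "\<dots> = (\<Sum>a\<in>N. G a * pmf X a - G a * pmf Y a - G 0 * pmf X a + G 0 * pmf Y a)"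
    by (rule sum.cong) (simp_all add: D_def algebra_simps)
  also have "\<dots> = (\<Sum>a\<in>N. G a * pmf X a) - (\<Sum>a\<in>N. G a * pmf Y a) - G 0 * (\<Sum>a\<in>N. pmf X a) + G 0 * (\<Sum>a\<in>N. pmf Y a)"
    by (simp only: sum.distrib sum_subtractf sum_distrib_left)
  also have "\<dots> = (\<Sum>a\<in>N. G a * pmf X a) - (\<Sum>a\<in>N. G a * pmf Y a)"
    unfolding P1 Q1 by simp
  finally have J2: "(\<Sum>\<^sub>\<infinity>k\<in>(UNIV::int set). (real_of_int k - m)^2 * g k) =
      (\<Sum>a\<in>N. G a * pmf X a) - (\<Sum>a\<in>N. G a * pmf Y a)" .
  have hp: "\<forall>i<n. 0 \<le> p i \<and> p i \<le> 1" and hq: "\<forall>i<n. 0 \<le> q i \<and> q i \<le> 1" using assms by auto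
  note MX = bern_sum_moments[OF hp, of m, unfolded exp_sum, folded X_def m_def s_def k_def N_def]
  note MY = bern_sum_moments[OF hq, of m, unfolded exp_sum, folded Y_def b_def t_def k'_def N_def]
  have EX: "(\<Sum>a\<in>N. G a * pmf X a) = k/3 + s/2"
    unfolding G_def lin3 MX[THEN conjunct1] MX[THEN conjunct2, THEN conjunct1] MX[THEN conjunct2, THEN conjunct2]
    by simp
  have EY: "(\<Sum>a\<in>N. G a * pmf Y a) = (k' + 3 * t * (-d) + (-d)^3)/3 + (t + (-d)^2)/2 + (-d)/6"
    unfolding G_def lin3 MY[THEN conjunct1] MY[THEN conjunct2, THEN conjunct1] MY[THEN conjunct2, THEN conjunct2] db
    by (simp add: field_simps power2_eq_square power3_eq_cube)
  have d0: "0 \<le> d" unfolding d_def using assms(4) by (intro sum_nonneg) auto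
  have s0: "0 \<le> s" unfolding s_def using assms(2) by (intro sum_nonneg) auto
  have kk: "k - k' \<le> d" unfolding k_def k'_def d_def sum_subtractf[symmetric]
    using assms(2-4) by (intro sum_mono kappa_bound) auto
  have ts: "t - s \<le> d" unfolding t_def s_def d_def sum_subtractf[symmetric]
  proof (intro sum_mono)
    fix i assume "i \<in> {..<n}"
    hence "0 \<le> q i" "q i \<le> p i" "p i \<le> 1" using assms(2-4) by auto
    hence "(p i - q i) * (p i + q i - 1) \<le> (p i - q i) * 1" by (intro mult_left_mono) auto
    thus "q i * (1 - q i) - p i * (1 - p i) \<le> p i - q i" by (simp add: algebra_simps)
  qed
  have st: "s - t \<le> d" unfolding t_def s_def d_def sum_subtractf[symmetric]
  proof (intro sum_mono)
    fix i assume "i \<in> {..<n}"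
    hence "0 \<le> q i" "q i \<le> p i" "p i \<le> 1" using assms(2-4) by auto
    hence "(p i - q i) * (1 - p i - q i) \<le> (p i - q i) * 1" by (intro mult_left_mono) auto
    thus "p i * (1 - p i) - q i * (1 - q i) \<le> p i - q i" by (simp add: algebra_simps)
  qed
  have fin: "(\<Sum>\<^sub>\<infinity>k\<in>(UNIV::int set). (real_of_int k - m)^2 * g k) \<le> 2 * d * (s + 1 + d^2)"
    unfolding J2 EX EY using final_ineq[OF d0 s0 kk ts st] .
  show ?thesis
    unfolding Let_def using fin by (simp only: g_def X_def Y_def s_def m_def d_def)
qed

end
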